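(* Let $\Omega\subset\mathbb{R}^n$ be a bounded domain, $1<p<\infty$, $0<s<1$, and let $r$ and $R$ be the interior and exterior diameters of $\Omega$ respectively. For ${\bf u}\in W^{s,p}(\Omega)^n$ let $\Pi_\Omega{\bf u}=\sum_{1\le i<j\le n}u_{ij}{\bf I}_{ij}$ be the (unique) linear map of this form with $\langle{\bf u}-\Pi_\Omega{\bf u},{\bf I}_{ij}\rangle=0$ for every $1\le i<j\le n$. Then there is a constant $C$ depending only on $n,p,s$ such that $$|{\bf u}-\Pi_\Omega{\bf u}|_{W^{s,p}(\Omega)^n}\le C\left(\tfrac Rr\right)^{n+2-2s}|{\bf u}-{\bf r}|_{W^{s,p}(\Omega)^n}$$ for every ${\bf u}\in W^{s,p}(\Omega)^n$ and every ${\bf r}\in RM$.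
   Context: $RM=\{{\bf r}(x)=Ax+b: A\in\mathbb{R}^{n\times n}\text{ skew-symmetric}, b\in\mathbb{R}^n\}$. $I_{ij}\in\mathbb{R}^{n\times n}$ ($i<j$) is the matrix with $(I_{ij})_{ij}=1$, $(I_{ij})_{ji}=-1$ and all other entries $0$; ${\bf I}_{ij}(x)=I_{ij}x$. $|{\bf v}|_{W^{s,p}(\Omega)^n}=\left(\int_\Omega\int_\Omega\frac{|{\bf v}(x)-{\bf v}(y)|^p}{|x-y|^{n+sp}}dy\,dx\right)^{1/p}$, and $W^{s,p}(\Omega)^n$ is the space of ${\bf v}\in L^p(\Omega)^n$ with this seminorm finite. $\langle{\bf u},{\bf v}\rangle=\int_\Omega\int_\Omega\frac{({\bf u}(x)-{\bf u}(y))\cdot({\bf v}(x)-{\bf v}(y))}{|x-y|^{n+2s}}dy\,dx$. The interior diameter $r$ is (comparable to) the diameter of the largest ball contained in $\Omega$, and the exterior diameter $R$ is (comparable to) the diameter of the smallest ball containing $\Omega$; equivalently one may take $r,R$ as radii of balls $B(w,r)\subset\Omega\subset B(z,R)$. *)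

theory Defs
  imports "HOL-Analysis.Analysis"
begin

definition gag_pow :: "real \<Rightarrow> real \<Rightarrow> (real^'n) set \<Rightarrow> (real^'n \<Rightarrow> real^'n) \<Rightarrow> ennreal" where
  "gag_pow s p \<Omega> v =
     (\<integral>\<^sup>+ x. (\<integral>\<^sup>+ y. ennreal (norm (v x - v y) powr p / norm (x - y) powr (real CARD('n) + s * p))
        \<partial>(lebesgue_on \<Omega>)) \<partial>(lebesgue_on \<Omega>))"

definition gag_semi :: "real \<Rightarrow> real \<Rightarrow> (real^'n) set \<Rightarrow> (real^'n \<Rightarrow> real^'n) \<Rightarrow> real" where
  "gag_semi s p \<Omega> v = enn2real (gag_pow s p \<Omega> v) powr (1 / p)"

definition Wsp :: "real \<Rightarrow> real \<Rightarrow> (real^'n) set \<Rightarrow> (real^'n \<Rightarrow> real^'n) set" where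
  "Wsp s p \<Omega> = {v. v \<in> borel_measurable (lebesgue_on \<Omega>)
                  \<and> integrable (lebesgue_on \<Omega>) (\<lambda>x. norm (v x) powr p)
                  \<and> gag_pow s p \<Omega> v < \<infinity>}"

definition gag_inner :: "real \<Rightarrow> (real^'n) set \<Rightarrow> (real^'n \<Rightarrow> real^'n) \<Rightarrow> (real^'n \<Rightarrow> real^'n) \<Rightarrow> real" where
  "gag_inner s \<Omega> u v =
     integral\<^sup>L (lebesgue_on \<Omega> \<Otimes>\<^sub>M lebesgue_on \<Omega>)
       (\<lambda>(x, y). ((u x - u y) \<bullet> (v x - v y)) / norm (x - y) powr (real CARD('n) + 2 * s))"

definition Imat :: "'n \<Rightarrow> 'n \<Rightarrow> real^'n^'n" where
  "Imat i j = (\<chi> a b. if a = i \<and> b = j then 1 else if a = j \<and> b = i then -1 else 0)"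

definition Ifun :: "'n \<Rightarrow> 'n \<Rightarrow> real^'n \<Rightarrow> real^'n" where
  "Ifun i j x = Imat i j *v x"

definition RM :: "(real^'n \<Rightarrow> real^'n) set" where
  "RM = {(\<lambda>x. A *v x + b) | A b. transpose A = - A}"

definition Pimap :: "('n::{finite,linorder} \<Rightarrow> 'n \<Rightarrow> real) \<Rightarrow> real^'n::{finite,linorder} \<Rightarrow> real^'n::{finite,linorder}" where
  "Pimap c x = (\<Sum>(i, j) \<in> {(i, j). i < j}. c i j *\<^sub>R Ifun i j x)"

end

theory Submission
  imports Defs
begin

lemma shell_index:
  fixes d \<rho> :: real
  assumes "0 < d" "d < \<rho>"
  shows "\<exists>k::nat. \<rho> * (1/2)^(Suc k) \<le> d \<and> d < \<rho> * (1/2)^k"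
proof -
  have "\<exists>k::nat. \<rho> * (1/2)^(Suc k) \<le> d"
  proof -
    obtain k :: nat where "(1/2::real)^k < d/\<rho>"
      using real_arch_pow_inv[of "d/\<rho>" "1/2"] assms by auto
    then have "\<rho> * (1/2)^k < d" using assms by (simp add: field_simps)
    then show ?thesis using assms by (intro exI[of _ k]) (auto simp: field_simps)
  qed
  then have ex: "\<exists>k. \<rho> * (1/2)^(Suc k) \<le> d" .
  define k where "k = (LEAST k::nat. \<rho> * (1/2)^(Suc k) \<le> d)"
  have k1: "\<rho> * (1/2)^(Suc k) \<le> d" unfolding k_def by (rule LeastI_ex[OF ex])
  have k2: "d < \<rho> * (1/2)^k"
  proof (cases k)
    case 0 then show ?thesis using assms by simp
  next
    case (Suc j)
    have "\<not> \<rho> * (1/2)^(Suc j) \<le> d"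
      using not_less_Least[of j "\<lambda>k. \<rho> * (1/2)^(Suc k) \<le> d"] Suc k_def by auto
    then show ?thesis using Suc by simp
  qed
  show ?thesis using k1 k2 by blast
qed

lemma powr_shell_bound:
  fixes d \<rho> \<beta> :: real
  assumes "\<rho> * (1/2)^(Suc k) \<le> d" "d < \<rho> * (1/2)^k" "0 < d"
  shows "d powr \<beta> \<le> 2 powr \<bar>\<beta>\<bar> * \<rho> powr \<beta> * ((1/2) powr \<beta>)^k"
proof -
  have \<rho>: "\<rho> > 0" using assms by (smt (verit) mult_nonpos_nonneg zero_le_divide_1_iff zero_le_power)
  have th: "((1/2::real) powr \<beta>)^k = ((1/2)^k) powr \<beta>"
    by (simp add: powr_powr powr_realpow[symmetric] mult.commute flip: powr_power)
  show ?thesis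
  proof (cases "\<beta> \<ge> 0")
    case True
    have "d powr \<beta> \<le> (\<rho> * (1/2)^k) powr \<beta>"
      using assms True by (intro powr_mono2) auto
    also have "\<dots> = \<rho> powr \<beta> * ((1/2)^k) powr \<beta>" using \<rho> by (simp add: powr_mult)
    also have "\<dots> \<le> 2 powr \<bar>\<beta>\<bar> * (\<rho> powr \<beta> * ((1/2)^k) powr \<beta>)"
      using mult_right_mono[of 1 "2 powr \<bar>\<beta>\<bar>" "\<rho> powr \<beta> * ((1/2)^k) powr \<beta>"] by (simp add: ge_one_powr_ge_zero)
    finally show ?thesis using th by (simp add: mult.assoc)
  next
    case False
    have "d powr \<beta> \<le> (\<rho> * (1/2)^(Suc k)) powr \<beta>"
      using assms False \<rho> by (intro powr_mono2') auto
    also have "\<dots> = \<rho> powr \<beta> * ((1/2)^k) powr \<beta> * (1/2) powr \<beta>" 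
      using \<rho> by (simp only: power_Suc powr_mult mult_ac mult_pos_pos zero_less_power zero_less_divide_iff)
    also have "(1/2::real) powr \<beta> = 2 powr \<bar>\<beta>\<bar>" using False
      by (simp add: powr_divide powr_minus_divide)
    finally show ?thesis using th by (simp add: mult_ac)
  qed
qed

lemma ennreal_term_le_suminf: "(f::nat \<Rightarrow> ennreal) k \<le> suminf f"
  using sum_le_suminf[of f "{k}"] by (simp add: summableI)

definition Ksing :: "nat \<Rightarrow> real \<Rightarrow> real" where
  "Ksing d \<beta> = unit_ball_vol (real d) * 2 powr \<bar>\<beta>\<bar> / (1 - (1/2) powr (real d + \<beta>))"

lemma Ksing_nonneg: "real d + \<beta> > 0 \<Longrightarrow> Ksing d \<beta> \<ge> 0"
  unfolding Ksing_def
  by (intro divide_nonneg_pos mult_nonneg_nonneg)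
     (auto simp: unit_ball_vol_nonneg powr01_less_one)

lemma sing_ball:
  fixes x :: "'a::euclidean_space"
  assumes \<rho>: "\<rho> > 0" and \<beta>: "real DIM('a) + \<beta> > 0"
  shows "(\<integral>\<^sup>+ y. ennreal (norm (x - y) powr \<beta> * indicator (ball x \<rho>) y) \<partial>lborel)
          \<le> ennreal (Ksing DIM('a) \<beta> * \<rho> powr (real DIM('a) + \<beta>))"
proof -
  define d where "d = DIM('a)"
  define a where "a = (\<lambda>k::nat. 2 powr \<bar>\<beta>\<bar> * \<rho> powr \<beta> * ((1/2) powr \<beta>)^k)"
  define g where "g = (1/2::real) powr (real d + \<beta>)"
  have g0: "0 \<le> g" and g1: "g < 1" unfolding g_def d_def using \<beta> by (auto simp: powr01_less_one)
  have a0: "a k \<ge> 0" for k unfolding a_def by simp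
  have pt: "ennreal (norm (x - y) powr \<beta> * indicator (ball x \<rho>) y)
      \<le> (\<Sum>k. ennreal (a k) * indicator (ball x (\<rho> * (1/2)^k)) y)" for y
  proof (cases "y \<in> ball x \<rho> \<and> y \<noteq> x")
    case True
    then have "0 < norm (x - y)" "norm (x - y) < \<rho>" by (auto simp: dist_norm)
    then obtain k where k: "\<rho> * (1/2)^(Suc k) \<le> norm (x - y)" "norm (x - y) < \<rho> * (1/2)^k"
      using shell_index by blast
    have "norm (x - y) powr \<beta> \<le> a k"
      unfolding a_def using powr_shell_bound[OF k] \<open>0 < norm (x - y)\<close> by blast
    then have "ennreal (norm (x - y) powr \<beta> * indicator (ball x \<rho>) y)
          \<le> ennreal (a k) * indicator (ball x (\<rho> * (1/2)^k)) y"
      using True k by (simp add: dist_norm indicator_def ennreal_leI)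
    also have "\<dots> \<le> (\<Sum>k. ennreal (a k) * indicator (ball x (\<rho> * (1/2)^k)) y)"
      by (rule ennreal_term_le_suminf[where f = "\<lambda>k. ennreal (a k) * indicator (ball x (\<rho> * (1/2)^k)) y"])
    finally show ?thesis .
  next
    case False
    then show ?thesis by (auto simp: indicator_def)
  qed
  have "(\<integral>\<^sup>+ y. ennreal (norm (x - y) powr \<beta> * indicator (ball x \<rho>) y) \<partial>lborel)
     \<le> (\<integral>\<^sup>+ y. (\<Sum>k. ennreal (a k) * indicator (ball x (\<rho> * (1/2)^k)) y) \<partial>lborel)"
    by (intro nn_integral_mono pt)
  also have "\<dots> = (\<Sum>k. \<integral>\<^sup>+ y. ennreal (a k) * indicator (ball x (\<rho> * (1/2)^k)) y \<partial>lborel)"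
    by (intro nn_integral_suminf) (measurable, simp add: pred_def)
  also have "\<dots> = (\<Sum>k. ennreal (a k * (unit_ball_vol d * (\<rho> * (1/2)^k) ^ d)))"
    using \<rho> by (simp add: nn_integral_cmult_indicator emeasure_ball d_def ennreal_mult a0 unit_ball_vol_nonneg)
  also have "(\<lambda>k. a k * (unit_ball_vol d * (\<rho> * (1/2)^k) ^ d))
      = (\<lambda>k. (unit_ball_vol d * 2 powr \<bar>\<beta>\<bar> * \<rho> powr (real d + \<beta>)) * g ^ k)"
  proof
    fix k
    have "((1/2::real) powr \<beta>)^k * ((1/2)^k)^d = g ^ k"
      unfolding g_def
      by (simp add: powr_add power_mult_distrib powr_realpow[symmetric] flip: power_mult powr_power)
         (simp add: powr_powr[symmetric] powr_realpow mult.commute power_mult flip: power_mult)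
    moreover have "\<rho> ^ d = \<rho> powr real d" using \<rho> by (simp add: powr_realpow)
    ultimately show "a k * (unit_ball_vol d * (\<rho> * (1/2)^k) ^ d)
      = (unit_ball_vol d * 2 powr \<bar>\<beta>\<bar> * \<rho> powr (real d + \<beta>)) * g ^ k"
      unfolding a_def using \<rho> by (simp add: power_mult_distrib powr_add mult_ac)
  qed
  also have "(\<Sum>k. ennreal ((unit_ball_vol d * 2 powr \<bar>\<beta>\<bar> * \<rho> powr (real d + \<beta>)) * g ^ k))
      = ennreal ((unit_ball_vol d * 2 powr \<bar>\<beta>\<bar> * \<rho> powr (real d + \<beta>)) * (1 / (1 - g)))"
    using g0 g1
    by (intro suminf_ennreal_eq sums_mult geometric_sums mult_nonneg_nonneg)
       (auto simp: unit_ball_vol_nonneg)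
  also have "\<dots> = ennreal (Ksing DIM('a) \<beta> * \<rho> powr (real DIM('a) + \<beta>))"
    unfolding Ksing_def g_def d_def by simp
  finally show ?thesis .
qed

lemma mat_bound:
  fixes N :: "real^'n^'n"
  shows "norm (N *v z) \<le> (\<Sum>a\<in>UNIV. \<Sum>b\<in>UNIV. \<bar>N$a$b\<bar>) * norm z"
proof -
  have "norm (N *v z) \<le> (\<Sum>a\<in>UNIV. \<bar>(N *v z)$a\<bar>)" by (rule norm_le_l1_cart)
  also have "\<dots> \<le> (\<Sum>a\<in>UNIV. \<Sum>b\<in>UNIV. \<bar>N$a$b\<bar> * norm z)"
  proof (intro sum_mono)
    fix a
    have "\<bar>(N *v z)$a\<bar> = \<bar>\<Sum>b\<in>UNIV. N$a$b * z$b\<bar>" by (simp add: matrix_vector_mult_def)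
    also have "\<dots> \<le> (\<Sum>b\<in>UNIV. \<bar>N$a$b * z$b\<bar>)" by (rule sum_abs)
    also have "\<dots> \<le> (\<Sum>b\<in>UNIV. \<bar>N$a$b\<bar> * norm z)"
      by (intro sum_mono) (simp add: abs_mult mult_left_mono component_le_norm_cart)
    finally show "\<bar>(N *v z)$a\<bar> \<le> (\<Sum>b\<in>UNIV. \<bar>N$a$b\<bar> * norm z)" .
  qed
  also have "\<dots> = (\<Sum>a\<in>UNIV. \<Sum>b\<in>UNIV. \<bar>N$a$b\<bar>) * norm z"
    by (simp add: sum_distrib_right)
  finally show ?thesis .
qed

definition Kup :: "nat \<Rightarrow> real \<Rightarrow> real \<Rightarrow> real" where
  "Kup d q s = unit_ball_vol (real d) * Ksing d (q - real d - s * q) * 2 powr (q * (1 - s))"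

lemma Kup_nonneg: "q * (1 - s) > 0 \<Longrightarrow> Kup d q s \<ge> 0"
  unfolding Kup_def by (intro mult_nonneg_nonneg Ksing_nonneg) (auto simp: unit_ball_vol_nonneg algebra_simps)

lemma pt_lip:
  fixes d \<mu> q s :: real
  assumes "0 < d" "0 \<le> \<mu>" "0 < q" "0 \<le> e" "e \<le> \<mu> * d"
  shows "e powr q / d powr (n + s * q) \<le> \<mu> powr q * d powr (q - n - s * q)"
proof -
  have "e powr q \<le> (\<mu> * d) powr q" using assms by (intro powr_mono2) auto
  also have "\<dots> = \<mu> powr q * d powr q" using assms by (simp add: powr_mult)
  finally have "e powr q / d powr (n + s * q) \<le> \<mu> powr q * d powr q / d powr (n + s * q)"
    by (intro divide_right_mono) auto
  also have "\<dots> = \<mu> powr q * d powr (q - n - s * q)"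
    using assms by (simp add: powr_diff diff_diff_eq)
  finally show ?thesis .
qed

lemma gag_pow_lip:
  fixes \<Omega> :: "(real^'n) set" and L :: "real^'n \<Rightarrow> real^'n"
  assumes \<Omega>: "\<Omega> \<in> sets lebesgue" and sub: "\<Omega> \<subseteq> ball z R" and R: "R > 0"
    and q: "q > 0" and s: "q * (1 - s) > 0"
    and \<mu>: "\<mu> \<ge> 0" and lip: "\<And>x y. norm (L x - L y) \<le> \<mu> * norm (x - y)"
  shows "gag_pow s q \<Omega> L \<le> ennreal (Kup CARD('n) q s * \<mu> powr q * R powr (real CARD('n) + q * (1 - s)))"
proof -
  define n where "n = real CARD('n)"
  define \<beta> where "\<beta> = q - n - s * q"
  have n\<beta>: "n + \<beta> = q * (1 - s)" unfolding \<beta>_def by (simp add: algebra_simps)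
  define c where "c = \<mu> powr q * (Ksing CARD('n) \<beta> * (2 * R) powr (q * (1 - s)))"
  have inner: "(\<integral>\<^sup>+ y. ennreal (norm (L x - L y) powr q / norm (x - y) powr (n + s * q)) \<partial>lebesgue_on \<Omega>)
      \<le> ennreal c" if x: "x \<in> \<Omega>" for x
  proof -
    have "(\<integral>\<^sup>+ y. ennreal (norm (L x - L y) powr q / norm (x - y) powr (n + s * q)) \<partial>lebesgue_on \<Omega>)
      = (\<integral>\<^sup>+ y. ennreal (norm (L x - L y) powr q / norm (x - y) powr (n + s * q)) * indicator \<Omega> y \<partial>lebesgue)"
      using \<Omega> by (simp add: nn_integral_restrict_space)
    also have "\<dots> \<le> (\<integral>\<^sup>+ y. ennreal (\<mu> powr q) * ennreal (norm (x - y) powr \<beta> * indicator (ball x (2 * R)) y) \<partial>lebesgue)"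
    proof (intro nn_integral_mono)
      fix y
      show "ennreal (norm (L x - L y) powr q / norm (x - y) powr (n + s * q)) * indicator \<Omega> y
          \<le> ennreal (\<mu> powr q) * ennreal (norm (x - y) powr \<beta> * indicator (ball x (2 * R)) y)"
      proof (cases "y \<in> \<Omega> \<and> y \<noteq> x")
        case True
        then have yb: "y \<in> ball x (2 * R)" using sub x
          by (auto simp: dist_norm) (smt (verit, ccfv_threshold) dist_commute dist_norm dist_triangle mem_ball subsetD)
        have "norm (L x - L y) powr q / norm (x - y) powr (n + s * q) \<le> \<mu> powr q * norm (x - y) powr \<beta>"
          unfolding \<beta>_def using True by (intro pt_lip q \<mu> lip) auto
        then show ?thesis using True yb by (simp add: ennreal_mult[symmetric] ennreal_leI)
      next
        case False
        then show ?thesis by (auto simp: indicator_def)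
      qed
    qed
    also have "\<dots> = ennreal (\<mu> powr q) * (\<integral>\<^sup>+ y. ennreal (norm (x - y) powr \<beta> * indicator (ball x (2 * R)) y) \<partial>lborel)"
      by (simp only: nn_integral_completion, rule nn_integral_cmult) (measurable, simp add: pred_def)
    also have "\<dots> \<le> ennreal (\<mu> powr q) * ennreal (Ksing CARD('n) \<beta> * (2 * R) powr (n + \<beta>))"
      using sing_ball[of "2 * R" \<beta> x] R n\<beta> s unfolding n_def
      by (intro mult_left_mono) auto
    also have "\<dots> = ennreal c"
    proof -
      have "Ksing CARD('n) \<beta> \<ge> 0" using n\<beta> s by (intro Ksing_nonneg) (simp add: n_def)
      then show ?thesis unfolding c_def using n\<beta> by (simp add: ennreal_mult[symmetric])
    qed
    finally show ?thesis .
  qed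
  have "gag_pow s q \<Omega> L \<le> (\<integral>\<^sup>+ x. ennreal c \<partial>lebesgue_on \<Omega>)"
    unfolding gag_pow_def n_def[symmetric]
    by (intro nn_integral_mono inner) (simp add: space_lebesgue_on)
  also have "\<dots> = ennreal c * emeasure lebesgue \<Omega>"
    using \<Omega> by (simp add: nn_integral_const space_lebesgue_on emeasure_restrict_space)
  also have "\<dots> \<le> ennreal c * emeasure lebesgue (ball z R)"
    using sub by (intro mult_left_mono emeasure_mono) auto
  also have "emeasure lebesgue (ball z R) = ennreal (unit_ball_vol n * R ^ CARD('n))"
    using R by (simp add: emeasure_completion emeasure_ball n_def)
  also have "ennreal c * \<dots> = ennreal (Kup CARD('n) q s * \<mu> powr q * R powr (n + q * (1 - s)))"
  proof -
    have "c * (unit_ball_vol n * R ^ CARD('n)) = Kup CARD('n) q s * \<mu> powr q * R powr (n + q * (1 - s))"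
      unfolding c_def Kup_def \<beta>_def n_def using R
      by (simp add: powr_mult powr_add powr_realpow mult_ac)
    moreover have "c \<ge> 0" unfolding c_def using n\<beta> s by (auto intro!: mult_nonneg_nonneg Ksing_nonneg simp: n_def)
    moreover have "unit_ball_vol n * R ^ CARD('n) \<ge> 0" using R unit_ball_vol_nonneg[of n] by (simp add: n_def)
    ultimately show ?thesis using ennreal_mult[of c "unit_ball_vol n * R ^ CARD('n)"] by metis
  qed
  finally show ?thesis unfolding n_def .
qed

definition Klow :: "nat \<Rightarrow> real \<Rightarrow> real" where
  "Klow d s = 1/4 * 2 powr (- (real d + 2 * s)) * (unit_ball_vol (real d) * (1 / (4 * real d)) ^ d)^2"

lemma Klow_nonneg: "Klow d s \<ge> 0"
  unfolding Klow_def by simp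

lemma lower_pt:
  fixes N :: "real^'n^'n" and a b :: 'n
  assumes r: "r > 0" and s: "s > 0"
    and m: "\<And>a' b'. \<bar>N$a'$b'\<bar> \<le> \<bar>N$a$b\<bar>"
    and x: "dist x (w + (r/2) *\<^sub>R axis b 1) < r / (4 * CARD('n))"
    and y: "dist y (w - (r/2) *\<^sub>R axis b 1) < r / (4 * CARD('n))"
  shows "(\<bar>N$a$b\<bar> * r / 2)^2 / (2 * r) powr (real CARD('n) + 2 * s)
           \<le> norm (N *v x - N *v y)^2 / norm (x - y) powr (real CARD('n) + 2 * s)"
proof -
  define n where "n = real CARD('n)"
  have n1: "n \<ge> 1" unfolding n_def by (simp add: Suc_leI)
  define m where "m = \<bar>N$a$b\<bar>"
  define e :: "real^'n" where "e = axis b 1"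
  have ne: "norm e = 1" unfolding e_def by (simp add: norm_axis_1)
  define z where "z = x - y"
  define \<epsilon> where "\<epsilon> = z - r *\<^sub>R e"
  have epsdef: "\<epsilon> = (x - (w + (r/2) *\<^sub>R e)) - (y - (w - (r/2) *\<^sub>R e))"
    unfolding \<epsilon>_def z_def by (simp add: algebra_simps flip: scaleR_add_left)
  have "norm \<epsilon> \<le> norm (x - (w + (r/2) *\<^sub>R e)) + norm (y - (w - (r/2) *\<^sub>R e))"
    unfolding epsdef by (rule norm_triangle_ineq4)
  also have "\<dots> < r / (4 * n) + r / (4 * n)"
    using x y unfolding e_def n_def dist_norm by simp
  finally have eps: "norm \<epsilon> < r / (2 * n)" by simp
  have z: "z = r *\<^sub>R e + \<epsilon>" unfolding \<epsilon>_def by simp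
  have "r = norm (r *\<^sub>R e)" using ne r by simp
  also have "\<dots> \<le> norm z + norm \<epsilon>" unfolding \<epsilon>_def using norm_triangle_ineq4[of z "z - r *\<^sub>R e"] by simp
  finally have "r - r / (2 * n) < norm z" using eps by linarith
  moreover have "r / (2 * n) \<le> r / 2" using n1 r by (intro divide_left_mono) auto
  ultimately have zpos: "norm z > 0" using r by linarith
  have "norm z \<le> norm (r *\<^sub>R e) + norm \<epsilon>" unfolding z by (rule norm_triangle_ineq)
  also have "\<dots> \<le> 2 * r" using eps ne r \<open>r / (2 * n) \<le> r / 2\<close> by simp
  finally have zle: "norm z \<le> 2 * r" .
  have Ne: "(N *v (r *\<^sub>R e))$a = r * N$a$b"
    unfolding e_def by (simp add: matrix_vector_mult_def axis_def if_distrib cong: if_cong)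
  have "\<bar>(N *v \<epsilon>)$a\<bar> = \<bar>\<Sum>b'\<in>UNIV. N$a$b' * \<epsilon>$b'\<bar>" by (simp add: matrix_vector_mult_def)
  also have "\<dots> \<le> (\<Sum>b'\<in>UNIV. \<bar>N$a$b' * \<epsilon>$b'\<bar>)" by (rule sum_abs)
  also have "\<dots> \<le> (\<Sum>b'\<in>(UNIV::'n set). m * norm \<epsilon>)"
    unfolding m_def by (intro sum_mono) (simp add: abs_mult mult_mono m component_le_norm_cart)
  also have "\<dots> = n * m * norm \<epsilon>" by (simp add: n_def)
  also have "\<dots> \<le> n * m * (r / (2 * n))"
    using eps by (intro mult_left_mono) (auto simp: m_def n_def)
  also have "\<dots> = m * r / 2" using n1 by (simp add: field_simps)
  finally have Neps: "\<bar>(N *v \<epsilon>)$a\<bar> \<le> m * r / 2" .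
  have "N *v x - N *v y = N *v z" unfolding z_def by (simp only: matrix_vector_mult_diff_distrib)
  also have "(N *v z)$a = r * N$a$b + (N *v \<epsilon>)$a"
    unfolding z by (simp add: matrix_vector_right_distrib Ne)
  finally have eq: "(N *v x - N *v y)$a = r * N$a$b + (N *v \<epsilon>)$a" .
  have rm: "\<bar>r * N$a$b\<bar> = r * m" using r by (simp add: abs_mult m_def)
  have "\<bar>(N *v x - N *v y)$a\<bar> \<ge> r * m - m * r / 2"
    unfolding eq using rm Neps by linarith
  then have low: "m * r / 2 \<le> norm (N *v x - N *v y)"
    using component_le_norm_cart[of "N *v x - N *v y" a] by (simp add: field_simps)
  have "(m * r / 2)^2 / (2 * r) powr (n + 2 * s) \<le> norm (N *v x - N *v y)^2 / (2 * r) powr (n + 2 * s)"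
    using low r unfolding m_def by (intro divide_right_mono power_mono) auto
  also have "\<dots> \<le> norm (N *v x - N *v y)^2 / norm z powr (n + 2 * s)"
    using zpos zle s n1 by (intro divide_left_mono powr_mono2 mult_pos_pos) auto
  finally show ?thesis unfolding m_def z_def n_def .
qed

lemma alg_low:
  fixes P Q Q' X m r U Rn f :: real
  assumes "P > 0" "Q > 0" "Q' = 1 / Q" "r^2 * Rn^2 = X * P"
  shows "(m * r / 2)^2 / (Q * P) * (U * (Rn * f))^2 = 1/4 * Q' * (U * f)^2 * m^2 * X"
proof -
  have "(m * r / 2)^2 / (Q * P) * (U * (Rn * f))^2 = (r^2 * Rn^2) * (m^2 * U^2 * f^2) / (4 * Q * P)"
    by (simp add: power_mult_distrib power_divide mult_ac)
  also have "\<dots> = X * (m^2 * U^2 * f^2) / (4 * Q)" unfolding assms(4) using assms by simp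
  finally show ?thesis using assms by (simp add: power_mult_distrib)
qed

lemma gag_lower:
  fixes \<Omega> :: "(real^'n) set" and N :: "real^'n^'n" and a b :: 'n
  assumes \<Omega>: "\<Omega> \<in> sets lebesgue" and wr: "ball w r \<subseteq> \<Omega>" and r: "r > 0" and s: "s > 0"
    and m: "\<And>a' b'. \<bar>N$a'$b'\<bar> \<le> \<bar>N$a$b\<bar>"
  shows "ennreal (Klow CARD('n) s * (N$a$b)^2 * r powr (real CARD('n) + 2 - 2 * s))
    \<le> (\<integral>\<^sup>+x. \<integral>\<^sup>+y. ennreal (norm (N *v x - N *v y)^2 / norm (x - y) powr (real CARD('n) + 2 * s))
          \<partial>lebesgue_on \<Omega> \<partial>lebesgue_on \<Omega>)"
proof -
  define n where "n = real CARD('n)"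
  have n1: "n \<ge> 1" unfolding n_def by (simp add: Suc_leI)
  define \<delta> where "\<delta> = r / (4 * n)"
  have \<delta>: "\<delta> > 0" "\<delta> \<le> r / 4" using r n1 unfolding \<delta>_def by (auto simp: field_simps intro: mult_left_mono)
  define e :: "real^'n" where "e = axis b 1"
  define B1 where "B1 = ball (w + (r/2) *\<^sub>R e) \<delta>"
  define B2 where "B2 = ball (w - (r/2) *\<^sub>R e) \<delta>"
  have "B1 \<subseteq> ball w r" unfolding B1_def e_def using \<delta> r
    by (subst ball_subset_ball_iff) (simp add: dist_norm norm_axis_1)
  then have B1: "B1 \<subseteq> \<Omega>" using wr by blast
  have "B2 \<subseteq> ball w r" unfolding B2_def e_def using \<delta> r
    by (subst ball_subset_ball_iff) (simp add: dist_norm norm_axis_1)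
  then have B2: "B2 \<subseteq> \<Omega>" using wr by blast
  define c where "c = (\<bar>N$a$b\<bar> * r / 2)^2 / (2 * r) powr (n + 2 * s)"
  have c0: "c \<ge> 0" unfolding c_def by simp
  have mB: "emeasure (lebesgue_on \<Omega>) B = ennreal (unit_ball_vol n * \<delta> ^ CARD('n))"
    if "B = ball q \<delta>" "B \<subseteq> \<Omega>" for B q
  proof -
    have "emeasure (lebesgue_on \<Omega>) B = emeasure lebesgue B"
      using \<Omega> that by (simp add: emeasure_restrict_space)
    also have "\<dots> = ennreal (unit_ball_vol n * \<delta> ^ CARD('n))"
      using \<delta> that by (simp add: emeasure_completion emeasure_ball n_def)
    finally show ?thesis .
  qed
  have sB: "B \<in> sets (lebesgue_on \<Omega>)" if "B = ball q \<delta>" "B \<subseteq> \<Omega>" for B q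
    using that \<Omega> by (subst sets_restrict_space_iff) auto
  have "(\<integral>\<^sup>+x. \<integral>\<^sup>+y. ennreal c * indicator B1 x * indicator B2 y \<partial>lebesgue_on \<Omega> \<partial>lebesgue_on \<Omega>)
     \<le> (\<integral>\<^sup>+x. \<integral>\<^sup>+y. ennreal (norm (N *v x - N *v y)^2 / norm (x - y) powr (n + 2 * s))
          \<partial>lebesgue_on \<Omega> \<partial>lebesgue_on \<Omega>)"
  proof (intro nn_integral_mono)
    fix x y
    show "ennreal c * indicator B1 x * indicator B2 y
       \<le> ennreal (norm (N *v x - N *v y)^2 / norm (x - y) powr (n + 2 * s))"
    proof (cases "x \<in> B1 \<and> y \<in> B2")
      case True
      then have "c \<le> norm (N *v x - N *v y)^2 / norm (x - y) powr (n + 2 * s)"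
        unfolding c_def n_def
        by (intro lower_pt[OF r s m]) (auto simp: B1_def B2_def \<delta>_def n_def e_def dist_commute)
      then show ?thesis using True by (simp add: ennreal_leI)
    qed auto
  qed
  also have "(\<integral>\<^sup>+x. \<integral>\<^sup>+y. ennreal c * indicator B1 x * indicator B2 y \<partial>lebesgue_on \<Omega> \<partial>lebesgue_on \<Omega>)
      = (\<integral>\<^sup>+x. (ennreal c * ennreal (unit_ball_vol n * \<delta> ^ CARD('n))) * indicator B1 x \<partial>lebesgue_on \<Omega>)"
  proof (intro nn_integral_cong)
    fix x
    have "(\<integral>\<^sup>+y. ennreal c * indicator B1 x * indicator B2 y \<partial>lebesgue_on \<Omega>)
        = ennreal c * indicator B1 x * emeasure (lebesgue_on \<Omega>) B2"
      using sB[OF B2_def B2] by (rule nn_integral_cmult_indicator)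
    then show "(\<integral>\<^sup>+y. ennreal c * indicator B1 x * indicator B2 y \<partial>lebesgue_on \<Omega>)
       = (ennreal c * ennreal (unit_ball_vol n * \<delta> ^ CARD('n))) * indicator B1 x"
      using mB[OF B2_def B2] by (simp add: mult_ac)
  qed
  also have "\<dots> = ennreal c * ennreal (unit_ball_vol n * \<delta> ^ CARD('n)) * ennreal (unit_ball_vol n * \<delta> ^ CARD('n))"
    using nn_integral_cmult_indicator[OF sB[OF B1_def B1]] mB[OF B1_def B1] by simp
  also have "\<dots> = ennreal (c * (unit_ball_vol n * \<delta> ^ CARD('n))^2)"
  proof -
    have U: "0 \<le> unit_ball_vol n * \<delta> ^ CARD('n)" using \<delta> n1 by simp
    then show ?thesis using c0
      by (simp add: ennreal_mult'[symmetric] power2_eq_square mult.assoc)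
  qed
  also have "c * (unit_ball_vol n * \<delta> ^ CARD('n))^2 = Klow CARD('n) s * (N$a$b)^2 * r powr (n + 2 - 2 * s)"
  proof -
    have d: "\<delta> ^ CARD('n) = r powr n * (1 / (4 * n)) ^ CARD('n)"
      unfolding \<delta>_def n_def using r by (simp add: powr_realpow power_divide)
    have e0: "(2 * r) powr (n + 2 * s) = 2 powr (n + 2 * s) * r powr (n + 2 * s)"
      using r by (simp add: powr_mult)
    have e1: "(\<bar>N$a$b\<bar> * r / 2)^2 = (N$a$b * r / 2)^2" by (simp add: power_mult_distrib power_divide)
    have "r^2 * (r powr n)^2 = r powr (n + 2 - 2 * s) * r powr (n + 2 * s)"
    proof -
      have 1: "(r powr n)^2 = r powr (2 * n)" by (simp add: power2_eq_square powr_add[symmetric])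
      have 2: "r^2 = r powr 2" using r by (simp add: powr_realpow)
      show ?thesis unfolding 1 2 by (simp add: powr_add[symmetric] add.commute)
    qed
    moreover have "2 powr (- (n + 2 * s)) = 1 / 2 powr (n + 2 * s)" using powr_minus_divide[of 2 "n + 2 * s"] by simp
    moreover have "r powr (n + 2 * s) > 0" "(2::real) powr (n + 2 * s) > 0" using r by auto
    ultimately show ?thesis
      unfolding c_def Klow_def d n_def[symmetric] e0 e1
      by (intro alg_low) auto
  qed
  finally show ?thesis unfolding n_def .
qed

lemma holder_nn:
  fixes f g :: "'a \<Rightarrow> real"
  assumes p: "p > 1" and q: "q > 1" and pq: "1/p + 1/q = 1"
    and fm: "f \<in> borel_measurable M" and gm: "g \<in> borel_measurable M"
    and f0: "\<And>x. f x \<ge> 0" and g0: "\<And>x. g x \<ge> 0"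
    and A: "(\<integral>\<^sup>+ x. ennreal (f x powr p) \<partial>M) = ennreal A" and A0: "A \<ge> 0"
    and B: "(\<integral>\<^sup>+ x. ennreal (g x powr q) \<partial>M) = ennreal B" and B0: "B \<ge> 0"
  shows "(\<integral>\<^sup>+ x. ennreal (f x * g x) \<partial>M) \<le> ennreal (A powr (1/p) * B powr (1/q))"
proof -
  note [measurable] = fm gm
  consider "A = 0" | "B = 0" | "A > 0 \<and> B > 0" using A0 B0 by linarith
  then show ?thesis
  proof cases
    case 1
    then have "AE x in M. ennreal (f x powr p) = 0"
      using A by (subst nn_integral_0_iff_AE[symmetric]) auto
    then have "AE x in M. ennreal (f x * g x) = 0"
      by eventually_elim (use f0 p in auto)
    then have "(\<integral>\<^sup>+ x. ennreal (f x * g x) \<partial>M) = 0"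
      by (subst nn_integral_0_iff_AE) auto
    then show ?thesis by simp
  next
    case 2
    then have "AE x in M. ennreal (g x powr q) = 0"
      using B by (subst nn_integral_0_iff_AE[symmetric]) auto
    then have "AE x in M. ennreal (f x * g x) = 0"
      by eventually_elim (use g0 q in auto)
    then have "(\<integral>\<^sup>+ x. ennreal (f x * g x) \<partial>M) = 0"
      by (subst nn_integral_0_iff_AE) auto
    then show ?thesis by simp
  next
    case 3
    define a where "a = A powr (1/p)"
    define b where "b = B powr (1/q)"
    have a: "a > 0" and b: "b > 0" using 3 unfolding a_def b_def by auto
    have ap: "a powr p = A" unfolding a_def using 3 p by (simp add: powr_powr)
    have bq: "b powr q = B" unfolding b_def using 3 q by (simp add: powr_powr)
    have pt: "f x * g x \<le> (a * b / (p * A)) * f x powr p + (a * b / (q * B)) * g x powr q" for x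
    proof -
      have "(f x / a) * (g x / b) \<le> (f x / a) powr p / p + (g x / b) powr q / q"
        using Youngs_inequality[OF p q pq, of "f x / a" "g x / b"] f0 g0 a b by auto
      also have "\<dots> = f x powr p / (p * A) + g x powr q / (q * B)"
        using a b f0 g0 by (simp add: powr_divide ap bq mult.commute)
      finally have "(f x * g x) / (a * b) \<le> f x powr p / (p * A) + g x powr q / (q * B)" by simp
      then have "f x * g x \<le> (a * b) * (f x powr p / (p * A) + g x powr q / (q * B))"
        using a b by (simp add: field_simps)
      then show ?thesis by (simp add: field_simps)
    qed
    have "(\<integral>\<^sup>+ x. ennreal (f x * g x) \<partial>M)
        \<le> (\<integral>\<^sup>+ x. ennreal (a * b / (p * A)) * ennreal (f x powr p) + ennreal (a * b / (q * B)) * ennreal (g x powr q) \<partial>M)"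
    proof (intro nn_integral_mono)
      fix x
      have "ennreal (f x * g x) \<le> ennreal ((a * b / (p * A)) * f x powr p + (a * b / (q * B)) * g x powr q)"
        using pt by (rule ennreal_leI)
      also have "\<dots> = ennreal (a * b / (p * A)) * ennreal (f x powr p) + ennreal (a * b / (q * B)) * ennreal (g x powr q)"
        using a b p q 3 by (simp add: ennreal_plus[symmetric] ennreal_mult[symmetric] del: ennreal_plus)
      finally show "ennreal (f x * g x) \<le> \<dots>" .
    qed
    also have "\<dots> = ennreal (a * b / (p * A)) * ennreal A + ennreal (a * b / (q * B)) * ennreal B"
      by (simp add: nn_integral_add nn_integral_cmult A B)
    also have "\<dots> = ennreal (a * b)"
    proof -
      have "ennreal (a * b / (p * A)) * ennreal A + ennreal (a * b / (q * B)) * ennreal B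
          = ennreal (a * b / (p * A) * A + a * b / (q * B) * B)"
        using a b p q 3 by (simp add: ennreal_plus[symmetric] ennreal_mult[symmetric] del: ennreal_plus)
      also have "a * b / (p * A) * A + a * b / (q * B) * B = a * b * (1/p + 1/q)"
        using 3 by (simp add: field_simps)
      finally show ?thesis using pq by simp
    qed
    finally show ?thesis unfolding a_def b_def .
  qed
qed

lemma sf_lebesgue: "sigma_finite_measure (lebesgue :: 'a::euclidean_space measure)"
proof -
  obtain A :: "'a set set" where A: "countable A" "A \<subseteq> sets lborel" "\<Union>A = space lborel"
      "\<forall>a\<in>A. emeasure lborel a \<noteq> \<infinity>"
    using sigma_finite_measure.sigma_finite_countable[OF sigma_finite_lborel] by blast
  show ?thesis
  proof (rule sigma_finite_measure.intro, rule exI[of _ A], intro conjI)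
    show "A \<subseteq> sets lebesgue" using A(2) by auto
    show "\<forall>a\<in>A. emeasure lebesgue a \<noteq> \<infinity>" using A(2,4) by (auto simp: emeasure_completion subset_eq)
  qed (use A in auto)
qed

lemma sf_on: "S \<in> sets lebesgue \<Longrightarrow> sigma_finite_measure (lebesgue_on (S :: 'a::euclidean_space set))"
  by (rule sigma_finite_measure_restrict_space[OF sf_lebesgue]) simp

lemma tonelli_on:
  fixes S :: "'a::euclidean_space set"
  assumes "S \<in> sets lebesgue" "F \<in> borel_measurable (lebesgue_on S \<Otimes>\<^sub>M lebesgue_on S)"
  shows "integral\<^sup>N (lebesgue_on S \<Otimes>\<^sub>M lebesgue_on S) F
        = (\<integral>\<^sup>+x. \<integral>\<^sup>+y. F (x, y) \<partial>lebesgue_on S \<partial>lebesgue_on S)"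
  by (rule sigma_finite_measure.nn_integral_fst[symmetric, OF sf_on[OF assms(1)] assms(2)])

lemma meas_id_on: "S \<in> sets lebesgue \<Longrightarrow> (\<lambda>x. x) \<in> borel_measurable (lebesgue_on S)"
  by (rule continuous_imp_measurable_on_sets_lebesgue) (auto intro: continuous_intros)

lemma gag_pow_P:
  fixes F :: "real^'n \<Rightarrow> real^'n"
  assumes S: "S \<in> sets lebesgue" and [measurable]: "F \<in> borel_measurable (lebesgue_on S)"
  shows "gag_pow s p S F = (\<integral>\<^sup>+z. ennreal (norm (F (fst z) - F (snd z)) powr p
            / norm (fst z - snd z) powr (real CARD('n) + s * p)) \<partial>(lebesgue_on S \<Otimes>\<^sub>M lebesgue_on S))"
proof -
  note [measurable] = meas_id_on[OF S]
  have m: "(\<lambda>z. ennreal (norm (F (fst z) - F (snd z)) powr p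
            / norm (fst z - snd z) powr (real CARD('n) + s * p))) \<in> borel_measurable (lebesgue_on S \<Otimes>\<^sub>M lebesgue_on S)"
    by measurable
  show ?thesis unfolding gag_pow_def using tonelli_on[OF S m] by simp
qed

lemma gag_pow_cong:
  assumes "\<And>x y. x \<in> S \<Longrightarrow> y \<in> S \<Longrightarrow> F x - F y = G x - G y"
  shows "gag_pow s p S F = gag_pow s p S G"
  unfolding gag_pow_def
  by (intro nn_integral_cong) (simp add: space_lebesgue_on assms)

lemma powr_add_le:
  fixes a b :: real
  assumes "a \<ge> 0" "b \<ge> 0" "p > 0"
  shows "(a + b) powr p \<le> 2 powr p * (a powr p + b powr p)"
proof -
  have "(a + b) powr p \<le> (2 * max a b) powr p" using assms by (intro powr_mono2) auto
  also have "\<dots> = 2 powr p * (max a b) powr p" using assms by (simp add: powr_mult)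
  also have "(max a b) powr p \<le> a powr p + b powr p" using assms by (simp add: max_def)
  finally show ?thesis using assms by (simp add: mult_left_mono)
qed

lemma gag_pow_add:
  fixes F G :: "real^'n \<Rightarrow> real^'n"
  assumes S: "S \<in> sets lebesgue" and [measurable]: "F \<in> borel_measurable (lebesgue_on S)" "G \<in> borel_measurable (lebesgue_on S)"
    and p: "p > 0"
  shows "gag_pow s p S (\<lambda>x. F x + G x) \<le> ennreal (2 powr p) * (gag_pow s p S F + gag_pow s p S G)"
proof -
  note [measurable] = meas_id_on[OF S]
  define n where "n = real CARD('n)"
  define P where "P = lebesgue_on S \<Otimes>\<^sub>M lebesgue_on S"
  define f where "f = (\<lambda>z. ennreal (norm (F (fst z) - F (snd z)) powr p / norm (fst z - snd z) powr (n + s * p)))"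
  define g where "g = (\<lambda>z. ennreal (norm (G (fst z) - G (snd z)) powr p / norm (fst z - snd z) powr (n + s * p)))"
  have fm: "f \<in> borel_measurable P" unfolding f_def P_def by measurable
  have gm: "g \<in> borel_measurable P" unfolding g_def P_def by measurable
  have "gag_pow s p S (\<lambda>x. F x + G x) = (\<integral>\<^sup>+z. ennreal (norm ((F (fst z) + G (fst z)) - (F (snd z) + G (snd z))) powr p
            / norm (fst z - snd z) powr (n + s * p)) \<partial>P)"
    unfolding n_def P_def by (rule gag_pow_P[OF S]) measurable
  also have "\<dots> \<le> (\<integral>\<^sup>+z. ennreal (2 powr p) * (f z + g z) \<partial>P)"
  proof (intro nn_integral_mono)
    fix z :: "(real^'n) \<times> (real^'n)"
    define a where "a = F (fst z) - F (snd z)"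
    define b where "b = G (fst z) - G (snd z)"
    define d where "d = norm (fst z - snd z) powr (n + s * p)"
    have d0: "d \<ge> 0" unfolding d_def by simp
    have "norm (a + b) powr p \<le> (norm a + norm b) powr p"
      using p by (intro powr_mono2) (auto simp: norm_triangle_ineq)
    also have "\<dots> \<le> 2 powr p * (norm a powr p + norm b powr p)" using p by (intro powr_add_le) auto
    finally have "norm (a + b) powr p / d \<le> 2 powr p * (norm a powr p / d + norm b powr p / d)"
      using d0 by (simp add: divide_right_mono add_divide_distrib[symmetric])
    then have "ennreal (norm (a + b) powr p / d) \<le> ennreal (2 powr p * (norm a powr p / d + norm b powr p / d))"
      by (rule ennreal_leI)
    also have "\<dots> = ennreal (2 powr p) * (ennreal (norm a powr p / d) + ennreal (norm b powr p / d))"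
      using d0 by (simp add: ennreal_mult ennreal_plus[symmetric] del: ennreal_plus)
    also have "a + b = (F (fst z) + G (fst z)) - (F (snd z) + G (snd z))" unfolding a_def b_def by simp
    finally show "ennreal (norm ((F (fst z) + G (fst z)) - (F (snd z) + G (snd z))) powr p / norm (fst z - snd z) powr (n + s * p))
      \<le> ennreal (2 powr p) * (f z + g z)"
      unfolding f_def g_def a_def b_def d_def .
  qed
  also have "\<dots> = ennreal (2 powr p) * ((\<integral>\<^sup>+z. f z \<partial>P) + (\<integral>\<^sup>+z. g z \<partial>P))"
    using fm gm by (simp add: nn_integral_cmult nn_integral_add)
  also have "(\<integral>\<^sup>+z. f z \<partial>P) = gag_pow s p S F" unfolding f_def P_def n_def by (rule gag_pow_P[OF S, symmetric]) measurable
  also have "(\<integral>\<^sup>+z. g z \<partial>P) = gag_pow s p S G" unfolding g_def P_def n_def by (rule gag_pow_P[OF S, symmetric]) measurable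
  finally show ?thesis .
qed

lemma pow_factor:
  fixes a d e p :: real
  assumes "a \<ge> 0" "d \<ge> 0" "p > 0"
  shows "(a / d powr (e / p)) powr p = a powr p / d powr e"
  using assms by (cases "d = 0") (simp_all add: powr_divide powr_powr)

lemma pair_bound:
  fixes F G :: "real^'n \<Rightarrow> real^'n"
  assumes S: "S \<in> sets lebesgue" and Fm[measurable]: "F \<in> borel_measurable (lebesgue_on S)" and Gm[measurable]: "G \<in> borel_measurable (lebesgue_on S)"
    and p: "p > 1" and q: "q > 1" and pq: "1/p + 1/q = 1"
    and A: "gag_pow s p S F = ennreal A" "A \<ge> 0"
    and B: "gag_pow s q S G = ennreal B" "B \<ge> 0"
  shows "integrable (lebesgue_on S \<Otimes>\<^sub>M lebesgue_on S)
           (\<lambda>z. ((F (fst z) - F (snd z)) \<bullet> (G (fst z) - G (snd z))) / norm (fst z - snd z) powr (real CARD('n) + 2 * s))"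
    and "\<bar>integral\<^sup>L (lebesgue_on S \<Otimes>\<^sub>M lebesgue_on S)
           (\<lambda>z. ((F (fst z) - F (snd z)) \<bullet> (G (fst z) - G (snd z))) / norm (fst z - snd z) powr (real CARD('n) + 2 * s))\<bar>
         \<le> A powr (1/p) * B powr (1/q)"
proof -
  note [measurable] = meas_id_on[OF S]
  define n where "n = real CARD('n)"
  define P where "P = lebesgue_on S \<Otimes>\<^sub>M lebesgue_on S"
  define h where "h = (\<lambda>z. ((F (fst z) - F (snd z)) \<bullet> (G (fst z) - G (snd z))) / norm (fst z - snd z) powr (n + 2 * s))"
  define f where "f = (\<lambda>z. norm (F (fst z) - F (snd z)) / norm (fst z - snd z) powr ((n + s * p) / p))"
  define g where "g = (\<lambda>z. norm (G (fst z) - G (snd z)) / norm (fst z - snd z) powr ((n + s * q) / q))"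
  have hm: "h \<in> borel_measurable P" unfolding h_def P_def by measurable
  have fm: "f \<in> borel_measurable P" unfolding f_def P_def by measurable
  have gm: "g \<in> borel_measurable P" unfolding g_def P_def by measurable
  have fA: "(\<integral>\<^sup>+z. ennreal (f z powr p) \<partial>P) = ennreal A"
  proof -
    have "(\<integral>\<^sup>+z. ennreal (f z powr p) \<partial>P) = gag_pow s p S F"
      unfolding gag_pow_P[OF S Fm] P_def f_def n_def using p by (simp add: pow_factor)
    then show ?thesis using A by simp
  qed
  have gB: "(\<integral>\<^sup>+z. ennreal (g z powr q) \<partial>P) = ennreal B"
  proof -
    have "(\<integral>\<^sup>+z. ennreal (g z powr q) \<partial>P) = gag_pow s q S G"
      unfolding gag_pow_P[OF S Gm] P_def g_def n_def using q by (simp add: pow_factor)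
    then show ?thesis using B by simp
  qed
  have hol: "(\<integral>\<^sup>+z. ennreal (f z * g z) \<partial>P) \<le> ennreal (A powr (1/p) * B powr (1/q))"
    by (rule holder_nn[OF p q pq fm gm _ _ fA A(2) gB B(2)]) (auto simp: f_def g_def)
  have e: "(n + s * p) / p + (n + s * q) / q = n + 2 * s"
  proof -
    have "(n + s * p) / p + (n + s * q) / q = n * (1/p + 1/q) + 2 * s" using p q by (simp add: field_simps)
    then show ?thesis using pq by simp
  qed
  have pt: "norm (h z) \<le> f z * g z" for z
  proof -
    define d where "d = norm (fst z - snd z)"
    show ?thesis
    proof (cases "d = 0")
      case True
      then show ?thesis unfolding h_def f_def g_def d_def by simp
    next
      case False
      then have d: "d > 0" unfolding d_def by simp
      have "norm (h z) = \<bar>(F (fst z) - F (snd z)) \<bullet> (G (fst z) - G (snd z))\<bar> / d powr (n + 2 * s)"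
        unfolding h_def d_def by simp
      also have "\<dots> \<le> norm (F (fst z) - F (snd z)) * norm (G (fst z) - G (snd z)) / d powr (n + 2 * s)"
        by (intro divide_right_mono Cauchy_Schwarz_ineq2) simp
      also have "d powr (n + 2 * s) = d powr ((n + s * p) / p) * d powr ((n + s * q) / q)"
        unfolding e[symmetric] using d by (simp add: powr_add)
      also have "norm (F (fst z) - F (snd z)) * norm (G (fst z) - G (snd z)) / \<dots> = f z * g z"
        unfolding f_def g_def d_def by simp
      finally show ?thesis .
    qed
  qed
  have nn: "(\<integral>\<^sup>+z. ennreal (norm (h z)) \<partial>P) \<le> ennreal (A powr (1/p) * B powr (1/q))"
    by (rule order_trans[OF nn_integral_mono hol]) (use pt in \<open>auto intro!: ennreal_leI\<close>)
  have int: "integrable P h"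
    by (rule integrableI_bounded[OF hm]) (use nn in \<open>auto simp: top_unique ennreal_less_top intro: le_less_trans\<close>)
  have "ennreal (integral\<^sup>L P (\<lambda>z. norm (h z))) = (\<integral>\<^sup>+z. ennreal (norm (h z)) \<partial>P)"
    by (rule nn_integral_eq_integral[symmetric]) (use int in auto)
  then have "integral\<^sup>L P (\<lambda>z. norm (h z)) \<le> A powr (1/p) * B powr (1/q)"
    using nn by (simp add: ennreal_le_iff[symmetric] del: ennreal_le_iff)
  moreover have "\<bar>integral\<^sup>L P h\<bar> \<le> integral\<^sup>L P (\<lambda>z. norm (h z))"
    using integral_norm_bound[of P h] by simp
  ultimately have "\<bar>integral\<^sup>L P h\<bar> \<le> A powr (1/p) * B powr (1/q)" by linarith
  then show "\<bar>integral\<^sup>L (lebesgue_on S \<Otimes>\<^sub>M lebesgue_on S)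
           (\<lambda>z. ((F (fst z) - F (snd z)) \<bullet> (G (fst z) - G (snd z))) / norm (fst z - snd z) powr (real CARD('n) + 2 * s))\<bar>
         \<le> A powr (1/p) * B powr (1/q)" unfolding h_def P_def n_def .
  show "integrable (lebesgue_on S \<Otimes>\<^sub>M lebesgue_on S)
           (\<lambda>z. ((F (fst z) - F (snd z)) \<bullet> (G (fst z) - G (snd z))) / norm (fst z - snd z) powr (real CARD('n) + 2 * s))"
    using int unfolding h_def P_def n_def .
qed

lemma sum_mat_mult:
  fixes M :: "'k \<Rightarrow> real^'n^'m"
  assumes "finite K"
  shows "(\<Sum>k\<in>K. M k) *v x = (\<Sum>k\<in>K. M k *v x)"
  using assms by (induction K rule: finite_induct) (simp_all add: matrix_vector_mult_add_rdistrib)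

lemma Imat_entry: "Imat i j $ a $ b = (if a = i \<and> b = j then 1 else if a = j \<and> b = i then -1 else (0::real))"
  unfolding Imat_def by simp

definition Pmat :: "('n::{finite,linorder} \<Rightarrow> 'n::{finite,linorder} \<Rightarrow> real) \<Rightarrow> real^'n::{finite,linorder}^'n::{finite,linorder}" where
  "Pmat c = (\<Sum>(i, j) \<in> {(i, j). i < j}. c i j *\<^sub>R Imat i j)"

lemma Pmat_entry:
  fixes c :: "'n::{finite,linorder} \<Rightarrow> 'n::{finite,linorder} \<Rightarrow> real"
  shows "Pmat c $ a $ b = (if a < b then c a b else if b < a then - c b a else 0)"
proof -
  define S where "S = {(i, j). (i::'n) < j}"
  have fin: "finite S" by simp
  have "Pmat c $ a $ b = (\<Sum>z\<in>S. ((case z of (i, j) \<Rightarrow> c i j *\<^sub>R Imat i j) $ a $ b))"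
    unfolding Pmat_def S_def by (simp only: sum_component)
  also have "\<dots> = (\<Sum>z\<in>S. (if z = (a, b) then c a b else 0) + (if z = (b, a) then - c b a else 0))"
  proof (intro sum.cong refl)
    fix z assume z: "z \<in> S"
    obtain i j where ij: "z = (i, j)" "i < j" using z unfolding S_def by auto
    have "(c i j *\<^sub>R Imat i j) $ a $ b = c i j * Imat i j $ a $ b" by simp
    also have "\<dots> = (if (i, j) = (a, b) then c a b else 0) + (if (i, j) = (b, a) then - c b a else 0)"
      unfolding Imat_entry using ij(2) by (cases "i = a"; cases "j = b"; cases "i = b"; cases "j = a") simp_all
    finally show "(case z of (i, j) \<Rightarrow> c i j *\<^sub>R Imat i j) $ a $ b
        = (if z = (a, b) then c a b else 0) + (if z = (b, a) then - c b a else 0)"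
      unfolding ij(1) by simp
  qed
  also have "\<dots> = (\<Sum>z\<in>S. (if z = (a, b) then c a b else 0)) + (\<Sum>z\<in>S. (if z = (b, a) then - c b a else 0))"
    by (rule sum.distrib)
  also have "\<dots> = (if a < b then c a b else if b < a then - c b a else 0)"
      using fin by (simp only: sum.delta' S_def) auto
  finally show ?thesis .
qed

lemma Pimap_Pmat:
  fixes c :: "'n::{finite,linorder} \<Rightarrow> 'n::{finite,linorder} \<Rightarrow> real" and x :: "real^'n::{finite,linorder}"
  shows "Pimap c x = Pmat c *v x"
proof -
  have "Pmat c *v x = (\<Sum>z\<in>{(i, j). i < j}. (case z of (i, j) \<Rightarrow> c i j *\<^sub>R Imat i j) *v x)"
    unfolding Pmat_def by (rule sum_mat_mult) simp
  also have "\<dots> = (\<Sum>z\<in>{(i, j). i < j}. (case z of (i, j) \<Rightarrow> c i j *\<^sub>R Ifun i j x))"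
  proof (intro sum.cong refl)
    fix z :: "'n::{finite,linorder} \<times> 'n::{finite,linorder}"
    obtain i j where "z = (i, j)" by (cases z)
    then show "(case z of (i, j) \<Rightarrow> c i j *\<^sub>R Imat i j) *v x = (case z of (i, j) \<Rightarrow> c i j *\<^sub>R Ifun i j x)"
      by (simp add: Ifun_def scaleR_matrix_vector_assoc)
  qed
  finally show ?thesis unfolding Pimap_def by simp
qed

lemma skew_decomp:
  fixes N :: "real^'n::{finite,linorder}^'n::{finite,linorder}"
  assumes "\<And>a b. N$b$a = - N$a$b"
  shows "N = Pmat (\<lambda>i j. N$i$j)"
proof -
  have *: "N$a$b = Pmat (\<lambda>i j. N$i$j) $ a $ b" for a b
  proof -
    have "N$a$a = 0" using assms[of a a] by simp
    then show ?thesis unfolding Pmat_entry using assms[of a b]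
      by (cases a b rule: linorder_cases) simp_all
  qed
  show ?thesis unfolding vec_eq_iff using * by blast
qed

lemma Pmat_skew:
  fixes c :: "'n::{finite,linorder} \<Rightarrow> 'n::{finite,linorder} \<Rightarrow> real"
  shows "Pmat c $ b $ a = - Pmat c $ a $ b"
  unfolding Pmat_entry by (cases a b rule: linorder_cases) auto

lemma Pmat_mult_sum:
  fixes c :: "'n::{finite,linorder} \<Rightarrow> 'n::{finite,linorder} \<Rightarrow> real" and x :: "real^'n::{finite,linorder}"
  shows "Pmat c *v x = (\<Sum>(i, j) \<in> {(i, j). i < j}. c i j *\<^sub>R Ifun i j x)"
  using Pimap_Pmat[of c x] unfolding Pimap_def by simp

lemma final_arith:
  fixes y g \<mu> m D KL cp cq rk Ra Rb :: real
  assumes g: "g \<ge> 0" and \<mu>: "\<mu> \<ge> 0" and m: "m \<ge> 0" and \<mu>m: "\<mu> \<le> D * m" and D: "D > 0"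
    and KL: "KL > 0" and cp: "cp \<ge> 0" and cq: "cq \<ge> 0" and rk: "rk > 0" and Ra: "Ra \<ge> 0" and Rb: "Rb \<ge> 0"
    and \<rho>: "Ra * Rb / rk \<ge> 1"
    and hy: "y \<le> 4 * (g + cp * \<mu> * Ra)"
    and hT: "KL * m^2 * rk \<le> g * (cq * \<mu> * Rb)"
  shows "y \<le> 4 * (1 + cp * cq * D^2 / KL) * (Ra * Rb / rk) * g"
proof -
  define \<rho> where "\<rho> = Ra * Rb / rk"
  define C1 where "C1 = cp * cq * D^2 / KL"
  have C1: "C1 \<ge> 0" unfolding C1_def using cp cq KL by simp
  have key: "cp * \<mu> * Ra \<le> C1 * \<rho> * g"
  proof (cases "m = 0")
    case True
    then have "\<mu> = 0" using \<mu> \<mu>m by simp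
    have "0 \<le> C1 * \<rho> * g" using C1 \<rho> g unfolding \<rho>_def by (intro mult_nonneg_nonneg) auto
    then show ?thesis using \<open>\<mu> = 0\<close> by simp
  next
    case False
    then have m0: "m > 0" using m by simp
    have "KL * m^2 * rk \<le> g * (cq * (D * m) * Rb)"
      using hT \<mu>m g cq Rb by (smt (verit) mult_left_mono mult_right_mono)
    then have "m * (KL * m * rk) \<le> m * (g * cq * D * Rb)" by (simp add: power2_eq_square mult_ac)
    then have hm: "KL * m * rk \<le> g * cq * D * Rb" using m0 by simp
    have "cp * \<mu> * Ra \<le> cp * (D * m) * Ra" using \<mu>m cp Ra by (simp add: mult_left_mono mult_right_mono)
    also have "\<dots> = (cp * D * Ra / (KL * rk)) * (KL * m * rk)" using KL rk by (simp add: field_simps)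
    also have "\<dots> \<le> (cp * D * Ra / (KL * rk)) * (g * cq * D * Rb)"
      using hm cp D Ra KL rk by (intro mult_left_mono) auto
    also have "\<dots> = C1 * \<rho> * g" unfolding C1_def \<rho>_def using KL rk by (simp add: field_simps power2_eq_square)
    finally show ?thesis .
  qed
  have "4 * (g + cp * \<mu> * Ra) \<le> 4 * (g + C1 * \<rho> * g)" using key by simp
  with hy have "y \<le> 4 * (g + C1 * \<rho> * g)" by (rule order_trans)
  also have "\<dots> \<le> 4 * (\<rho> * g + C1 * \<rho> * g)"
  proof -
    have "1 * g \<le> \<rho> * g" using \<rho> g unfolding \<rho>_def by (intro mult_right_mono) auto
    then show ?thesis by simp
  qed
  also have "\<dots> = 4 * (1 + C1) * \<rho> * g" by (simp add: algebra_simps)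
  finally show ?thesis unfolding C1_def \<rho>_def .
qed

lemma powr_split:
  fixes K \<mu> R e p :: real
  assumes "K \<ge> 0" "\<mu> \<ge> 0" "R > 0" "p > 0"
  shows "(K * \<mu> powr p * R powr e) powr (1/p) = K powr (1/p) * \<mu> * R powr (e / p)"
proof -
  have "(K * \<mu> powr p * R powr e) powr (1/p) = K powr (1/p) * (\<mu> powr p) powr (1/p) * (R powr e) powr (1/p)"
    using assms by (simp add: powr_mult)
  also have "(\<mu> powr p) powr (1/p) = \<mu>"
    using assms by (cases "\<mu> = 0") (simp_all add: powr_powr)
  also have "(R powr e) powr (1/p) = R powr (e / p)" by (simp add: powr_powr)
  finally show ?thesis .
qed

lemma root_bound:
  fixes Y G X p :: real
  assumes "Y \<ge> 0" "G \<ge> 0" "X \<ge> 0" "p > 1" "Y \<le> 2 powr p * (G + X)"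
  shows "Y powr (1/p) \<le> 4 * (G powr (1/p) + X powr (1/p))"
proof -
  have "Y powr (1/p) \<le> (2 powr p * (G + X)) powr (1/p)" using assms by (intro powr_mono2) auto
  also have "\<dots> = 2 * (G + X) powr (1/p)" using assms by (simp add: powr_mult powr_powr)
  also have "(G + X) powr (1/p) \<le> 2 powr (1/p) * (G powr (1/p) + X powr (1/p))"
    using assms by (intro powr_add_le) auto
  also have "2 powr (1/p) * (G powr (1/p) + X powr (1/p)) \<le> 2 * (G powr (1/p) + X powr (1/p))"
  proof (intro mult_right_mono)
    have "(2::real) powr (1/p) \<le> 2 powr 1" using assms by (intro powr_mono) auto
    then show "(2::real) powr (1/p) \<le> 2" by simp
  qed auto
  finally show ?thesis by simp
qed

definition Cst :: "nat \<Rightarrow> real \<Rightarrow> real \<Rightarrow> real" where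
  "Cst d p s = 4 * (1 + Kup d p s powr (1/p) * Kup d (p / (p - 1)) s powr (1 / (p / (p - 1)))
                 * (real d * real d)^2 / Klow d s)"

lemma Klow_pos: 
  assumes "d > 0" shows "Klow d s > 0"
proof -
  have "unit_ball_vol (real d) > 0" by simp
  moreover have "(1 / (4 * real d)) ^ d > 0" using assms by simp
  ultimately have "unit_ball_vol (real d) * (1 / (4 * real d)) ^ d > 0" by (rule mult_pos_pos)
  then show ?thesis unfolding Klow_def using assms by (intro mult_pos_pos zero_less_power) auto
qed

lemma fin3:
  fixes a b :: ennreal
  assumes "a < \<infinity>" "b \<le> ennreal c"
  shows "ennreal k * (a + b) < \<infinity>"
proof -
  have "b < \<infinity>" using assms(2) by (simp add: le_less_trans)
  then have "a + b < \<infinity>" using assms(1) by (simp add: ennreal_add_less_top)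
  then show ?thesis by (simp add: ennreal_mult_less_top)
qed

lemma neg_mv: "(- (A::real^'n^'m)) *v x = - (A *v x)"
  by (simp add: vec_eq_iff matrix_vector_mult_def sum_negf)

lemma lin_meas: "S \<in> sets lebesgue \<Longrightarrow> (\<lambda>x. (M::real^'n^'m) *v x) \<in> borel_measurable (lebesgue_on S)"
  by (rule continuous_imp_measurable_on_sets_lebesgue) (auto intro: matrix_vector_mult_linear_continuous_on)

lemma mat_lip: "norm ((M::real^'n^'n) *v x - M *v y) \<le> (\<Sum>a\<in>UNIV. \<Sum>b\<in>UNIV. \<bar>M$a$b\<bar>) * norm (x - y)"
  using mat_bound[of M "x - y"] by (simp add: matrix_vector_mult_diff_distrib)

lemma mu_nonneg: "(\<Sum>a\<in>UNIV. \<Sum>b\<in>UNIV. \<bar>(M::real^'n^'m)$a$b\<bar>) \<ge> 0"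
  by (intro sum_nonneg) auto

lemma gag_pow_mat:
  fixes \<Omega> :: "(real^'n) set" and M :: "real^'n^'n"
  assumes "\<Omega> \<in> sets lebesgue" "\<Omega> \<subseteq> ball z R" "R > 0" "t > 0" "t * (1 - s) > 0"
  shows "gag_pow s t \<Omega> (\<lambda>x. M *v x) \<le> ennreal (Kup CARD('n) t s * (\<Sum>a\<in>UNIV. \<Sum>b\<in>UNIV. \<bar>M$a$b\<bar>) powr t * R powr (real CARD('n) + t * (1 - s)))"
  by (rule gag_pow_lip[OF assms mu_nonneg mat_lip])

lemma core:
  fixes p s :: real and \<Omega> :: "(real^'n::{finite,linorder}) set"
    and u :: "real^'n::{finite,linorder} \<Rightarrow> real^'n::{finite,linorder}"
    and A :: "real^'n::{finite,linorder}^'n::{finite,linorder}" and b :: "real^'n::{finite,linorder}"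
  assumes p: "1 < p" and s0: "0 < s" and s1: "s < 1"
    and \<Omega>: "open \<Omega>" and wr: "ball w r \<subseteq> \<Omega>" and zR: "\<Omega> \<subseteq> ball z R" and r: "0 < r"
    and u: "u \<in> Wsp s p \<Omega>"
    and orth: "\<forall>i j. i < j \<longrightarrow> gag_inner s \<Omega> (\<lambda>x. u x - Pimap c x) (Ifun i j) = 0"
    and A: "Finite_Cartesian_Product.transpose A = - A"
  shows "gag_semi s p \<Omega> (\<lambda>x. u x - Pimap c x)
           \<le> Cst CARD('n) p s * (R / r) powr (real CARD('n) + 2 - 2 * s) * gag_semi s p \<Omega> (\<lambda>x. u x - (A *v x + b))"
proof -
  define n where "n = real CARD('n)"
  have n1: "n \<ge> 1" unfolding n_def by (simp add: Suc_leI)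
  define q where "q = p / (p - 1)"
  have q: "q > 1" unfolding q_def using p by (simp add: field_simps)
  have pq: "1/p + 1/q = 1" unfolding q_def using p by (simp add: field_simps)
  have \<Omega>s: "\<Omega> \<in> sets lebesgue" using \<Omega> by auto
  have "ball w r \<subseteq> ball z R" using wr zR by blast
  then have rR: "r \<le> R" using r by (auto simp: ball_subset_ball_iff) (smt (verit) zero_le_dist)
  have R: "R > 0" using rR r by simp
  have um[measurable]: "u \<in> borel_measurable (lebesgue_on \<Omega>)" and ufin: "gag_pow s p \<Omega> u < \<infinity>"
    using u unfolding Wsp_def by auto
  note idm[measurable] = meas_id_on[OF \<Omega>s]
  note linm[measurable] = lin_meas[OF \<Omega>s]
  define Mc where "Mc = Pmat c"
  define N where "N = A - Mc"
  define V where "V = (\<lambda>x. u x - (A *v x + b))"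
  define W where "W = (\<lambda>x. u x - Pimap c x)"
  have Vm[measurable]: "V \<in> borel_measurable (lebesgue_on \<Omega>)" unfolding V_def by measurable
  have Wm[measurable]: "W \<in> borel_measurable (lebesgue_on \<Omega>)" unfolding W_def Pimap_Pmat by measurable
  have Nm[measurable]: "(\<lambda>x. N *v x) \<in> borel_measurable (lebesgue_on \<Omega>)" by measurable
  have WV: "W x = V x + N *v x + b" for x
    unfolding W_def V_def N_def Mc_def Pimap_Pmat by (simp add: matrix_vector_mult_diff_rdistrib)
  have ps: "p * (1 - s) > 0" "q * (1 - s) > 0" using p q s1 by auto
  have Vfin: "gag_pow s p \<Omega> V < \<infinity>"
  proof -
    have "gag_pow s p \<Omega> V = gag_pow s p \<Omega> (\<lambda>x. u x + (- A) *v x)"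
      by (rule gag_pow_cong) (simp add: V_def neg_mv algebra_simps)
    also have "\<dots> \<le> ennreal (2 powr p) * (gag_pow s p \<Omega> u + gag_pow s p \<Omega> (\<lambda>x. (- A) *v x))"
      using p by (intro gag_pow_add[OF \<Omega>s]) auto
    also have "\<dots> < \<infinity>"
      using p by (intro fin3[OF ufin gag_pow_mat[OF \<Omega>s zR R _ ps(1)]]) auto
    finally show ?thesis .
  qed
  define G where "G = enn2real (gag_pow s p \<Omega> V)"
  have G: "gag_pow s p \<Omega> V = ennreal G" "G \<ge> 0" unfolding G_def using Vfin
    by (auto simp: ennreal_enn2real_if less_top[symmetric])
  define \<mu> where "\<mu> = (\<Sum>a\<in>UNIV. \<Sum>b\<in>UNIV. \<bar>N$a$b\<bar>)"
  have \<mu>0: "\<mu> \<ge> 0" unfolding \<mu>_def by (rule mu_nonneg)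
  define Kp where "Kp = Kup CARD('n) p s"
  define Kq where "Kq = Kup CARD('n) q s"
  have Kp0: "Kp \<ge> 0" unfolding Kp_def using ps by (intro Kup_nonneg) auto
  have Kq0: "Kq \<ge> 0" unfolding Kq_def using ps by (intro Kup_nonneg) auto
  define X where "X = Kp * \<mu> powr p * R powr (n + p * (1 - s))"
  have X0: "X \<ge> 0" unfolding X_def using Kp0 by simp
  have Np: "gag_pow s p \<Omega> (\<lambda>x. N *v x) \<le> ennreal X"
    unfolding X_def Kp_def \<mu>_def n_def using p by (intro gag_pow_mat[OF \<Omega>s zR R _ ps(1)]) auto
  have Nq: "gag_pow s q \<Omega> (\<lambda>x. N *v x) \<le> ennreal (Kq * \<mu> powr q * R powr (n + q * (1 - s)))"
    unfolding Kq_def \<mu>_def n_def using q by (intro gag_pow_mat[OF \<Omega>s zR R _ ps(2)]) auto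
  define HP where "HP = enn2real (gag_pow s p \<Omega> (\<lambda>x. N *v x))"
  define HN where "HN = enn2real (gag_pow s q \<Omega> (\<lambda>x. N *v x))"
  have HP: "gag_pow s p \<Omega> (\<lambda>x. N *v x) = ennreal HP" "HP \<ge> 0" "HP \<le> X"
    unfolding HP_def using Np X0
    by (auto simp: ennreal_enn2real_if top_unique enn2real_leI)
  have HN: "gag_pow s q \<Omega> (\<lambda>x. N *v x) = ennreal HN" "HN \<ge> 0" "HN \<le> Kq * \<mu> powr q * R powr (n + q * (1 - s))"
    unfolding HN_def using Nq Kq0
    by (auto simp: ennreal_enn2real_if top_unique enn2real_leI)
  have Wle: "gag_pow s p \<Omega> W \<le> ennreal (2 powr p) * (ennreal G + ennreal HP)"
  proof -
    have "gag_pow s p \<Omega> W = gag_pow s p \<Omega> (\<lambda>x. V x + N *v x)"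
      by (rule gag_pow_cong) (simp add: WV)
    also have "\<dots> \<le> ennreal (2 powr p) * (gag_pow s p \<Omega> V + gag_pow s p \<Omega> (\<lambda>x. N *v x))"
      using p by (intro gag_pow_add[OF \<Omega>s]) auto
    finally show ?thesis using G HP by simp
  qed
  define Y where "Y = enn2real (gag_pow s p \<Omega> W)"
  have Wfin: "gag_pow s p \<Omega> W < \<infinity>"
    using Wle by (simp add: le_less_trans ennreal_mult_less_top flip: ennreal_plus)
  have Y: "gag_pow s p \<Omega> W = ennreal Y" "Y \<ge> 0" unfolding Y_def using Wfin
    by (auto simp: ennreal_enn2real_if less_top[symmetric])
  have YX: "Y \<le> 2 powr p * (G + X)"
  proof -
    have "ennreal Y \<le> ennreal (2 powr p * (G + HP))"
      using Wle Y(1) G(2) HP(2) by (simp add: ennreal_mult flip: ennreal_plus)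
    then have "Y \<le> 2 powr p * (G + HP)" using G(2) HP(2) by (simp add: ennreal_le_iff)
    also have "\<dots> \<le> 2 powr p * (G + X)" using HP(3) by simp
    finally show ?thesis .
  qed
  define P where "P = lebesgue_on \<Omega> \<Otimes>\<^sub>M lebesgue_on \<Omega>"
  define K where "K = (\<lambda>z::(real^'n::{finite,linorder}) \<times> (real^'n::{finite,linorder}). norm (fst z - snd z) powr (n + 2 * s))"
  define S where "S = {(i, j). (i::'n::{finite,linorder}) < j}"
  define hI where "hI = (\<lambda>i j z. (W (fst z) - W (snd z)) \<bullet> (Ifun i j (fst z) - Ifun i j (snd z)) / K z)"
  have Ifeq: "Ifun i j = (\<lambda>x. Imat i j *v x)" for i j by (rule ext) (simp add: Ifun_def)
  have Ifm: "Ifun i j \<in> borel_measurable (lebesgue_on \<Omega>)" for i j unfolding Ifeq by measurable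
  have Ifin: "gag_pow s q \<Omega> (Ifun i j) = ennreal (enn2real (gag_pow s q \<Omega> (Ifun i j)))"
      "enn2real (gag_pow s q \<Omega> (Ifun i j)) \<ge> 0" for i j
  proof -
    have "gag_pow s q \<Omega> (Ifun i j) < \<infinity>"
      unfolding Ifeq using q by (intro le_less_trans[OF gag_pow_mat[OF \<Omega>s zR R _ ps(2)]]) auto
    then show "gag_pow s q \<Omega> (Ifun i j) = ennreal (enn2real (gag_pow s q \<Omega> (Ifun i j)))"
      by (auto simp: ennreal_enn2real_if less_top[symmetric])
  qed simp
  have intI: "integrable P (hI i j)" for i j
    unfolding P_def hI_def K_def n_def
    by (rule pair_bound(1)[OF \<Omega>s Wm Ifm p q pq Y(1,2) Ifin])
  have zeroI: "integral\<^sup>L P (hI i j) = 0" if "(i, j) \<in> S" for i j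
  proof -
    have "i < j" using that by (simp add: S_def)
    then have "gag_inner s \<Omega> W (Ifun i j) = 0" using orth unfolding W_def by blast
    then show ?thesis unfolding gag_inner_def P_def hI_def K_def n_def by (simp add: case_prod_unfold)
  qed
  have Nskew: "N$b'$a' = - N$a'$b'" for a' b'
  proof -
    have "A$b'$a' = - A$a'$b'"
      using arg_cong[OF A, of "\<lambda>M. M$a'$b'"] by (simp add: Finite_Cartesian_Product.transpose_def)
    then show ?thesis unfolding N_def Mc_def using Pmat_skew[of c b' a'] by simp
  qed
  have Ndec: "N *v x - N *v y = (\<Sum>(i, j) \<in> S. N$i$j *\<^sub>R (Ifun i j x - Ifun i j y))" for x y
  proof -
    have "N *v x = (\<Sum>(i, j) \<in> S. N$i$j *\<^sub>R Ifun i j x)" for x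
      using Pmat_mult_sum[of "\<lambda>i j. N$i$j" x] skew_decomp[of N, OF Nskew] unfolding S_def by simp
    then show ?thesis
      by (simp add: case_prod_unfold scaleR_diff_right sum_subtractf)
  qed
  define hN where "hN = (\<lambda>z. (W (fst z) - W (snd z)) \<bullet> (N *v fst z - N *v snd z) / K z)"
  have hNsum: "hN z = (\<Sum>ij \<in> S. N$(fst ij)$(snd ij) * hI (fst ij) (snd ij) z)" for z
    unfolding hN_def hI_def Ndec
    by (simp add: case_prod_unfold inner_sum_right sum_divide_distrib)
  have hN0: "integral\<^sup>L P hN = 0"
  proof -
    have "integral\<^sup>L P hN = (\<Sum>ij \<in> S. integral\<^sup>L P (\<lambda>z. N$(fst ij)$(snd ij) * hI (fst ij) (snd ij) z))"
      unfolding hNsum by (intro Bochner_Integration.integral_sum integrable_mult_right intI)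
    also have "\<dots> = 0"
      using zeroI by (intro sum.neutral) auto
    finally show ?thesis .
  qed
  define hV where "hV = (\<lambda>z. (V (fst z) - V (snd z)) \<bullet> (N *v fst z - N *v snd z) / K z)"
  define hNN where "hNN = (\<lambda>z. (N *v fst z - N *v snd z) \<bullet> (N *v fst z - N *v snd z) / K z)"
  have intV: "integrable P hV" and bndV: "\<bar>integral\<^sup>L P hV\<bar> \<le> G powr (1/p) * HN powr (1/q)"
    unfolding P_def hV_def K_def n_def
    by (rule pair_bound[OF \<Omega>s Vm Nm p q pq G HN(1,2)])+
  have intNN: "integrable P hNN"
    unfolding P_def hNN_def K_def n_def
    by (rule pair_bound(1)[OF \<Omega>s Nm Nm p q pq HP(1,2) HN(1,2)])
  have hNsplit: "hN z = hV z + hNN z" for z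
  proof -
    have d: "W (fst z) - W (snd z) = (V (fst z) - V (snd z)) + (N *v fst z - N *v snd z)"
      by (simp add: WV algebra_simps)
    show ?thesis by (simp only: hN_def hV_def hNN_def d inner_add_left add_divide_distrib)
  qed
  define T where "T = integral\<^sup>L P hNN"
  have "integral\<^sup>L P hN = integral\<^sup>L P hV + T"
    unfolding T_def hNsplit[abs_def] by (rule Bochner_Integration.integral_add[OF intV intNN])
  then have TV: "T = - integral\<^sup>L P hV" using hN0 by simp
  have Tup: "T \<le> G powr (1/p) * HN powr (1/q)" using TV bndV by linarith
  obtain a0 b0 where ab: "\<And>a' b'. \<bar>N$a'$b'\<bar> \<le> \<bar>N$a0$b0\<bar>"
  proof -
    have "finite ((\<lambda>ab. \<bar>N$(fst ab)$(snd ab)\<bar>) ` UNIV)" by simp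
    define Mx where "Mx = Max ((\<lambda>ab. \<bar>N$(fst ab)$(snd ab)\<bar>) ` UNIV)"
    have "Mx \<in> (\<lambda>ab. \<bar>N$(fst ab)$(snd ab)\<bar>) ` UNIV" unfolding Mx_def by (intro Max_in) auto
    then obtain ab0 where ab0: "Mx = \<bar>N$(fst ab0)$(snd ab0)\<bar>" by auto
    have "\<bar>N$a'$b'\<bar> \<le> Mx" for a' b'
      unfolding Mx_def by (rule Max_ge) (auto intro!: image_eqI[of _ _ "(a', b')"])
    then show ?thesis using that ab0 by metis
  qed
  define m where "m = \<bar>N$a0$b0\<bar>"
  have m0: "m \<ge> 0" unfolding m_def by simp
  have \<mu>m: "\<mu> \<le> (n * n) * m"
  proof -
    have "\<mu> \<le> (\<Sum>a\<in>(UNIV::'n set). \<Sum>b\<in>(UNIV::'n set). m)"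
      unfolding \<mu>_def m_def by (intro sum_mono ab)
    then show ?thesis by (simp add: n_def)
  qed
  have Tlow: "Klow CARD('n) s * m^2 * r powr (n + 2 - 2 * s) \<le> T"
  proof -
    have nnT: "ennreal T = (\<integral>\<^sup>+z. ennreal (hNN z) \<partial>P)"
      unfolding T_def by (rule nn_integral_eq_integral[symmetric, OF intNN]) (simp add: hNN_def K_def)
    have hNNm: "(\<lambda>z. ennreal (hNN z)) \<in> borel_measurable P"
      unfolding hNN_def K_def P_def by measurable
    have "(\<integral>\<^sup>+z. ennreal (hNN z) \<partial>P) = (\<integral>\<^sup>+x. \<integral>\<^sup>+y. ennreal (hNN (x, y)) \<partial>lebesgue_on \<Omega> \<partial>lebesgue_on \<Omega>)"
      unfolding P_def by (rule tonelli_on[OF \<Omega>s hNNm[unfolded P_def]])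
    also have "\<dots> = (\<integral>\<^sup>+x. \<integral>\<^sup>+y. ennreal (norm (N *v x - N *v y)^2 / norm (x - y) powr (n + 2 * s))
          \<partial>lebesgue_on \<Omega> \<partial>lebesgue_on \<Omega>)"
      unfolding hNN_def K_def by (simp add: power2_norm_eq_inner)
    finally have "ennreal T = \<dots>" using nnT by simp
    moreover have "ennreal (Klow CARD('n) s * (N$a0$b0)^2 * r powr (n + 2 - 2 * s)) \<le> \<dots>"
      unfolding n_def by (rule gag_lower[OF \<Omega>s wr r s0 ab])
    ultimately have "ennreal (Klow CARD('n) s * (N$a0$b0)^2 * r powr (n + 2 - 2 * s)) \<le> ennreal T" by simp
    moreover have "T \<ge> 0" unfolding T_def hNN_def K_def by (intro integral_nonneg_AE) auto
    ultimately show ?thesis unfolding m_def by (simp add: ennreal_le_iff)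
  qed
  define k where "k = n + 2 - 2 * s"
  have k0: "k \<ge> 0" unfolding k_def using n1 s1 by simp
  define Ra where "Ra = R powr ((n + p * (1 - s)) / p)"
  define Rb where "Rb = R powr ((n + q * (1 - s)) / q)"
  have RaRb: "Ra * Rb = R powr k"
  proof -
    have "(n + p * (1 - s)) / p + (n + q * (1 - s)) / q = n * (1/p + 1/q) + 2 * (1 - s)"
      using p q by (simp add: field_simps)
    then have "(n + p * (1 - s)) / p + (n + q * (1 - s)) / q = k" unfolding k_def using pq by simp
    then show ?thesis unfolding Ra_def Rb_def by (simp add: powr_add[symmetric])
  qed
  have rk: "r powr k > 0" using r by simp
  have \<rho>: "Ra * Rb / r powr k \<ge> 1"
  proof -
    have "r powr k \<le> R powr k" using rR r k0 by (intro powr_mono2) auto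
    then show ?thesis unfolding RaRb using rk by simp
  qed
  define g where "g = G powr (1/p)"
  have g0: "g \<ge> 0" unfolding g_def by simp
  have hy: "Y powr (1/p) \<le> 4 * (g + Kp powr (1/p) * \<mu> * Ra)"
  proof -
    have "Y powr (1/p) \<le> 4 * (G powr (1/p) + X powr (1/p))"
      by (rule root_bound[OF Y(2) G(2) X0 p YX])
    also have "X powr (1/p) = Kp powr (1/p) * \<mu> * Ra"
      unfolding X_def Ra_def using Kp0 \<mu>0 R p by (intro powr_split) auto
    finally show ?thesis unfolding g_def .
  qed
  have hT: "Klow CARD('n) s * m^2 * r powr k \<le> g * (Kq powr (1/q) * \<mu> * Rb)"
  proof -
    have "HN powr (1/q) \<le> (Kq * \<mu> powr q * R powr (n + q * (1 - s))) powr (1/q)"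
      using HN(2,3) q by (intro powr_mono2) auto
    also have "\<dots> = Kq powr (1/q) * \<mu> * Rb"
      unfolding Rb_def using Kq0 \<mu>0 R q by (intro powr_split) auto
    finally have "g * HN powr (1/q) \<le> g * (Kq powr (1/q) * \<mu> * Rb)" using g0 by (intro mult_left_mono)
    then show ?thesis using Tlow Tup unfolding k_def g_def by linarith
  qed
  have fin: "Y powr (1/p) \<le> 4 * (1 + Kp powr (1/p) * Kq powr (1/q) * (n * n)^2 / Klow CARD('n) s) * (Ra * Rb / r powr k) * g"
    by (rule final_arith[OF g0 \<mu>0 m0 \<mu>m _ Klow_pos _ _ rk _ _ \<rho> hy hT])
       (use n1 Kp0 Kq0 R in \<open>auto simp: Ra_def Rb_def\<close>)
  have semW: "gag_semi s p \<Omega> (\<lambda>x. u x - Pimap c x) = Y powr (1/p)"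
    unfolding gag_semi_def Y_def W_def ..
  have semV: "gag_semi s p \<Omega> (\<lambda>x. u x - (A *v x + b)) = g"
    unfolding gag_semi_def g_def G_def V_def ..
  have Rr: "(R / r) powr k = Ra * Rb / r powr k" unfolding RaRb using R r by (simp add: powr_divide)
  have CC: "Cst CARD('n) p s = 4 * (1 + Kp powr (1/p) * Kq powr (1/q) * (n * n)^2 / Klow CARD('n) s)"
    unfolding Cst_def Kp_def Kq_def q_def n_def ..
  show ?thesis unfolding semW semV CC k_def[symmetric] n_def[symmetric] Rr using fin by (simp add: mult_ac)
qed

theorem proposition4p4:
  fixes p s :: real
  assumes "1 < p" and "0 < s" and "s < 1"
  shows "\<exists>C. \<forall>(\<Omega> :: (real^'n::{finite,linorder}) set) w r z R u c rr.
           open \<Omega> \<and> connected \<Omega> \<and> bounded \<Omega> \<and> 0 < r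
           \<and> ball w r \<subseteq> \<Omega> \<and> \<Omega> \<subseteq> ball z R
           \<and> u \<in> Wsp s p \<Omega>
           \<and> (\<forall>i j. i < j \<longrightarrow> gag_inner s \<Omega> (\<lambda>x. u x - Pimap c x) (Ifun i j) = 0)
           \<and> rr \<in> RM
           \<longrightarrow> gag_semi s p \<Omega> (\<lambda>x. u x - Pimap c x)
                 \<le> C * (R / r) powr (real CARD('n) + 2 - 2 * s) * gag_semi s p \<Omega> (\<lambda>x. u x - rr x)"
proof (intro exI[of _ "Cst CARD('n) p s"] allI impI)
  fix \<Omega> :: "(real^'n::{finite,linorder}) set" and w z :: "real^'n::{finite,linorder}" and r R :: real
    and u rr :: "real^'n::{finite,linorder} \<Rightarrow> real^'n::{finite,linorder}" and c :: "'n::{finite,linorder} \<Rightarrow> 'n::{finite,linorder} \<Rightarrow> real"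
  assume H: "open \<Omega> \<and> connected \<Omega> \<and> bounded \<Omega> \<and> 0 < r
           \<and> ball w r \<subseteq> \<Omega> \<and> \<Omega> \<subseteq> ball z R
           \<and> u \<in> Wsp s p \<Omega>
           \<and> (\<forall>i j. i < j \<longrightarrow> gag_inner s \<Omega> (\<lambda>x. u x - Pimap c x) (Ifun i j) = 0)
           \<and> rr \<in> RM"
  then obtain A b where rr: "rr = (\<lambda>x. A *v x + b)" and A: "Finite_Cartesian_Product.transpose A = - A"
    unfolding RM_def by blast
  show "gag_semi s p \<Omega> (\<lambda>x. u x - Pimap c x)
                 \<le> Cst CARD('n) p s * (R / r) powr (real CARD('n) + 2 - 2 * s) * gag_semi s p \<Omega> (\<lambda>x. u x - rr x)"
    unfolding rr using core[OF assms, of \<Omega> w r z R u c A b] H A by blast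
qed

end
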